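(* In the setting below, if there is a subinterval $[t_1,t_2]\subset(0,1]$ with $t_1<t_2$ on which $Z_1(t)$ stays on one of the coordinate axes, then both $Z_1(t)$ and $Z_2(t)$ stay on the coordinate axes (each on an axis) for all $t\in(0,1]$.
   Context: Planar three-body problem with masses $m_1=m_2=m_3=1$, $\chi=\{q=(q_1,q_2,q_3)\in(\mathbb{R}^2)^3: q_1+q_2+q_3=0\}$, action $\mathcal{A}(q)=\int_0^1\big(\tfrac12\sum|\dot q_i|^2+\sum_{i<j}\frac{1}{|q_i-q_j|}\big)dt$. Let $Q_{S_4}=\{q: q_1=q_2=(-a_2,0),\ q_3=(2a_2,0),\ a_2\ge0\}$ and $Q_{E_1}=\{q: q_1=(0,-2b_1),\ q_2=(-b_2,b_1),\ q_3=(b_2,b_1),\ b_1,b_2\in\mathbb{R}\}$. Let $q$ minimize $\mathcal{A}$ over $\{q\in H^1([0,1],\chi): q(0)\in Q_{S_4},\ q(1)\in Q_{E_1}\}$; it is collision-free for $t\in(0,1]$ and there satisfies Newton's equations $\ddot q_i=\sum_{j\ne i}\frac{q_j-q_i}{|q_j-q_i|^3}$. Jacobi coordinates: $Z_1=q_1-q_2$, $Z_2=q_3-\frac{q_1+q_2}{2}$. *)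

theory Defs
  imports "HOL-Analysis.Analysis"
begin

text \<open>Planar three-body problem with unit masses.\<close>

definition H1_path :: "(real \<Rightarrow> complex) \<Rightarrow> bool" where
  "H1_path f \<longleftrightarrow> (\<exists>g. g absolutely_integrable_on {0..1} \<and>
       (\<lambda>t. (norm (g t))\<^sup>2) integrable_on {0..1} \<and>
       (\<forall>t\<in>{0..1}. f t = f 0 + integral {0..t} g))"

definition pot :: "complex \<Rightarrow> complex \<Rightarrow> ennreal" where
  "pot x y = (if x = y then \<infinity> else ennreal (1 / cmod (x - y)))"

definition action :: "(real \<Rightarrow> complex) \<Rightarrow> (real \<Rightarrow> complex) \<Rightarrow> (real \<Rightarrow> complex) \<Rightarrow> ennreal" where
  "action q1 q2 q3 = (\<integral>\<^sup>+ t. indicator {0..1::real} t *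
      (ennreal (1/2 * ((cmod (vector_derivative q1 (at t)))\<^sup>2
                     + (cmod (vector_derivative q2 (at t)))\<^sup>2
                     + (cmod (vector_derivative q3 (at t)))\<^sup>2))
       + pot (q1 t) (q2 t) + pot (q1 t) (q3 t) + pot (q2 t) (q3 t)) \<partial>lborel)"

definition in_Q_S4 :: "complex \<Rightarrow> complex \<Rightarrow> complex \<Rightarrow> bool" where
  "in_Q_S4 x1 x2 x3 \<longleftrightarrow> (\<exists>a::real. a \<ge> 0 \<and> x1 = complex_of_real (-a) \<and>
      x2 = complex_of_real (-a) \<and> x3 = complex_of_real (2*a))"

definition in_Q_E1 :: "complex \<Rightarrow> complex \<Rightarrow> complex \<Rightarrow> bool" where
  "in_Q_E1 x1 x2 x3 \<longleftrightarrow> (\<exists>b1 b2::real. x1 = Complex 0 (-2*b1) \<and>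
      x2 = Complex (-b2) b1 \<and> x3 = Complex b2 b1)"

definition admissible :: "(real \<Rightarrow> complex) \<Rightarrow> (real \<Rightarrow> complex) \<Rightarrow> (real \<Rightarrow> complex) \<Rightarrow> bool" where
  "admissible q1 q2 q3 \<longleftrightarrow> H1_path q1 \<and> H1_path q2 \<and> H1_path q3 \<and>
     (\<forall>t\<in>{0..1}. q1 t + q2 t + q3 t = 0) \<and>
     in_Q_S4 (q1 0) (q2 0) (q3 0) \<and> in_Q_E1 (q1 1) (q2 1) (q3 1)"

definition force :: "complex \<Rightarrow> complex \<Rightarrow> complex \<Rightarrow> complex" where
  "force x y z = (y - x) / complex_of_real ((cmod (y - x))^3)
               + (z - x) / complex_of_real ((cmod (z - x))^3)"

definition on_x_axis :: "complex \<Rightarrow> bool" where "on_x_axis z \<longleftrightarrow> Im z = 0"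
definition on_y_axis :: "complex \<Rightarrow> bool" where "on_y_axis z \<longleftrightarrow> Re z = 0"

end

theory Submission
  imports Defs
begin


definition g :: "complex \<Rightarrow> complex" where "g x = x / complex_of_real (cmod x ^ 3)"

lemma force_g: "force x y z = g (y - x) + g (z - x)"
  unfolding force_def g_def by simp

lemma cube_diff: fixes ra rb M :: real
  assumes "0 \<le> ra" "ra \<le> M" "0 \<le> rb" "rb \<le> M"
  shows "\<bar>rb^3 - ra^3\<bar> \<le> 3 * M^2 * \<bar>rb - ra\<bar>"
proof -
  have "rb^3 - ra^3 = (rb - ra) * (ra^2 + ra*rb + rb^2)" by (simp add: algebra_simps power2_eq_square power3_eq_cube)
  then have "\<bar>rb^3 - ra^3\<bar> = \<bar>rb - ra\<bar> * (ra^2 + ra*rb + rb^2)" using assms by (simp add: abs_mult)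
  also have "ra^2 + ra*rb + rb^2 \<le> 3 * M^2"
  proof -
    have "ra^2 \<le> M^2" "rb^2 \<le> M^2" "ra*rb \<le> M*M" using assms by (auto intro: power_mono mult_mono)
    then show ?thesis by (simp add: power2_eq_square)
  qed
  then have "\<bar>rb - ra\<bar> * (ra^2 + ra*rb + rb^2) \<le> \<bar>rb - ra\<bar> * (3 * M^2)" by (intro mult_left_mono) auto
  finally show ?thesis by (simp add: algebra_simps)
qed

lemma g_lip_ineq:
  assumes m: "0 < m" and a: "m \<le> cmod a" "cmod a \<le> M" and b: "m \<le> cmod b" "cmod b \<le> M"
  shows "cmod (g a - g b) \<le> (1/m^3 + 3*M^3/m^6) * cmod (a - b)"
proof -
  define ra rb where "ra = cmod a" and "rb = cmod b"
  have ra0: "ra > 0" "rb > 0" using m a b unfolding ra_def rb_def by auto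
  have eq: "g a - g b = (a - b) / complex_of_real (ra^3) + b * complex_of_real ((rb^3 - ra^3) / (ra^3 * rb^3))"
    unfolding g_def ra_def[symmetric] rb_def[symmetric] using ra0
    by (simp add: field_simps)
  have n1: "cmod ((a - b) / complex_of_real (ra^3)) \<le> cmod (a - b) / m^3"
  proof -
    have "cmod ((a - b) / complex_of_real (ra^3)) = cmod (a - b) / ra^3" using ra0 by (simp add: norm_divide norm_power)
    also have "\<dots> \<le> cmod (a - b) / m^3"
      using ra0 m a unfolding ra_def by (intro divide_left_mono power_mono mult_pos_pos) auto
    finally show ?thesis .
  qed
  have n2: "cmod (b * complex_of_real ((rb^3 - ra^3) / (ra^3 * rb^3))) \<le> 3*M^3/m^6 * cmod (a - b)"
  proof -
    have "cmod (b * complex_of_real ((rb^3 - ra^3) / (ra^3 * rb^3))) = rb * (\<bar>rb^3 - ra^3\<bar> / (ra^3 * rb^3))"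
    proof -
      have "cmod (b * complex_of_real ((rb^3 - ra^3) / (ra^3 * rb^3))) = cmod b * \<bar>(rb^3 - ra^3) / (ra^3 * rb^3)\<bar>"
        by (simp only: norm_mult norm_of_real)
      also have "\<bar>(rb^3 - ra^3) / (ra^3 * rb^3)\<bar> = \<bar>rb^3 - ra^3\<bar> / (ra^3 * rb^3)"
        using ra0 by (simp add: abs_divide)
      finally show ?thesis unfolding rb_def .
    qed
    also have "\<dots> \<le> M * ((3 * M^2 * cmod (a - b)) / (m^3 * m^3))"
    proof -
      have A0: "\<bar>rb^3 - ra^3\<bar> \<le> 3 * M^2 * \<bar>rb - ra\<bar>" using a b ra0 unfolding ra_def rb_def by (intro cube_diff) auto
      have A1: "\<bar>rb - ra\<bar> \<le> cmod (a - b)" unfolding ra_def rb_def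
        by (metis abs_minus_commute norm_triangle_ineq3)
      have A: "\<bar>rb^3 - ra^3\<bar> \<le> 3 * M^2 * cmod (a - b)"
        using A0 mult_left_mono[OF A1, of "3 * M^2"] by simp
      have B: "m^3 * m^3 \<le> ra^3 * rb^3" using m a b unfolding ra_def rb_def by (intro mult_mono power_mono) auto
      have C: "\<bar>rb^3 - ra^3\<bar> / (ra^3 * rb^3) \<le> (3 * M^2 * cmod (a - b)) / (m^3 * m^3)"
        using A B m by (intro frac_le) auto
      have D: "rb \<le> M" using b unfolding rb_def by simp
      show ?thesis using C D ra0 m by (intro mult_mono) auto
    qed
    also have "\<dots> = 3*M^3/m^6 * cmod (a - b)" proof -
      have "m^3 * m^3 = m^6" by (simp flip: power_add)
      moreover have "M * M^2 = M^3" by (simp add: power3_eq_cube power2_eq_square)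
      ultimately show ?thesis by (simp add: mult.assoc[symmetric])
    qed
    finally show ?thesis .
  qed
  have "cmod (g a - g b) \<le> cmod (a - b) / m^3 + 3*M^3/m^6 * cmod (a - b)"
    unfolding eq by (rule order_trans[OF norm_triangle_ineq add_mono[OF n1 n2]])
  then show ?thesis by (simp add: field_simps)
qed

lemma g_lip:
  assumes "x0 \<noteq> 0"
  shows "\<exists>e>0. \<exists>L\<ge>0. \<forall>a b. cmod (a - x0) < e \<longrightarrow> cmod (b - x0) < e \<longrightarrow> cmod (g a - g b) \<le> L * cmod (a - b)"
proof -
  define m where "m = cmod x0 / 2"
  define M where "M = 3 * cmod x0 / 2"
  have m: "m > 0" using assms unfolding m_def by simp
  have bd: "m \<le> cmod a \<and> cmod a \<le> M" if "cmod (a - x0) < m" for a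
  proof -
    have "cmod x0 - cmod a \<le> cmod (a - x0)" using norm_triangle_ineq2[of x0 a] by (simp add: norm_minus_commute)
    moreover have "cmod a - cmod x0 \<le> cmod (a - x0)" using norm_triangle_ineq2[of a x0] by simp
    ultimately show ?thesis using that unfolding m_def M_def by linarith
  qed
  show ?thesis
    apply (rule exI[of _ m], rule conjI[OF m], rule exI[of _ "1/m^3 + 3*M^3/m^6"])
    using m bd g_lip_ineq[OF m] unfolding M_def by (auto intro!: add_nonneg_nonneg)
qed


lemma force_lip:
  assumes "y0 \<noteq> x0" "z0 \<noteq> x0"
  shows "\<exists>e>0. \<exists>L\<ge>0. \<forall>x y z x' y' z'. cmod (x - x0) < e \<longrightarrow> cmod (y - y0) < e \<longrightarrow> cmod (z - z0) < e \<longrightarrow>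
     cmod (x' - x0) < e \<longrightarrow> cmod (y' - y0) < e \<longrightarrow> cmod (z' - z0) < e \<longrightarrow>
     cmod (force x y z - force x' y' z') \<le> L * (cmod (x - x') + cmod (y - y') + cmod (z - z'))"
proof -
  obtain e1 L1 where e1: "e1 > 0" "L1 \<ge> 0" and l1: "\<forall>a b. cmod (a - (y0 - x0)) < e1 \<longrightarrow> cmod (b - (y0 - x0)) < e1 \<longrightarrow> cmod (g a - g b) \<le> L1 * cmod (a - b)"
    using g_lip[of "y0 - x0"] assms by auto
  obtain e2 L2 where e2: "e2 > 0" "L2 \<ge> 0" and l2: "\<forall>a b. cmod (a - (z0 - x0)) < e2 \<longrightarrow> cmod (b - (z0 - x0)) < e2 \<longrightarrow> cmod (g a - g b) \<le> L2 * cmod (a - b)"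
    using g_lip[of "z0 - x0"] assms by auto
  define e where "e = min e1 e2 / 2"
  have tri: "cmod ((u - v) - (u0 - v0)) < e'" if "cmod (u - u0) < e' / 2" "cmod (v - v0) < e' / 2" for u v u0 v0 e'
  proof -
    have "cmod ((u - v) - (u0 - v0)) \<le> cmod (u - u0) + cmod (v - v0)"
      using norm_triangle_ineq4[of "u - u0" "v - v0"] by (simp add: algebra_simps)
    then show ?thesis using that by linarith
  qed
  have tri2: "cmod ((u - v) - (u' - v')) \<le> cmod (u - u') + cmod (v - v')" for u v u' v' :: complex
    using norm_triangle_ineq4[of "u - u'" "v - v'"] by (simp add: algebra_simps)
  show ?thesis
  proof (intro exI conjI allI impI)
    show "e > 0" unfolding e_def using e1 e2 by simp
    show "L1 + L2 \<ge> 0" using e1 e2 by simp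
    fix x y z x' y' z'
    assume h: "cmod (x - x0) < e" "cmod (y - y0) < e" "cmod (z - z0) < e"
      "cmod (x' - x0) < e" "cmod (y' - y0) < e" "cmod (z' - z0) < e"
    have A: "cmod (g (y - x) - g (y' - x')) \<le> L1 * (cmod (y - y') + cmod (x - x'))"
    proof -
      have "cmod (g (y - x) - g (y' - x')) \<le> L1 * cmod ((y - x) - (y' - x'))"
        using l1 tri[of y y0 e1 x x0] tri[of y' y0 e1 x' x0] h unfolding e_def by auto
      also have "\<dots> \<le> L1 * (cmod (y - y') + cmod (x - x'))" using e1 tri2 by (intro mult_left_mono) auto
      finally show ?thesis .
    qed
    have B: "cmod (g (z - x) - g (z' - x')) \<le> L2 * (cmod (z - z') + cmod (x - x'))"
    proof -
      have "cmod (g (z - x) - g (z' - x')) \<le> L2 * cmod ((z - x) - (z' - x'))"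
        using l2 tri[of z z0 e2 x x0] tri[of z' z0 e2 x' x0] h unfolding e_def by auto
      also have "\<dots> \<le> L2 * (cmod (z - z') + cmod (x - x'))" using e2 tri2 by (intro mult_left_mono) auto
      finally show ?thesis .
    qed
    have "cmod (force x y z - force x' y' z') \<le> cmod (g (y - x) - g (y' - x')) + cmod (g (z - x) - g (z' - x'))"
      unfolding force_g using norm_triangle_ineq[of "g (y - x) - g (y' - x')" "g (z - x) - g (z' - x')"]
      by (simp add: algebra_simps)
    also have "\<dots> \<le> L1 * (cmod (y - y') + cmod (x - x')) + L2 * (cmod (z - z') + cmod (x - x'))"
      using A B by linarith
    also have "\<dots> \<le> (L1 + L2) * (cmod (x - x') + cmod (y - y') + cmod (z - z'))"
      using e1 e2 by (simp add: algebra_simps add_mono mult_left_mono)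
    finally show "cmod (force x y z - force x' y' z') \<le> (L1 + L2) * (cmod (x - x') + cmod (y - y') + cmod (z - z'))" .
  qed
qed


type_synonym st = "complex \<times> complex \<times> complex \<times> complex \<times> complex \<times> complex"

definition FF :: "st \<Rightarrow> st" where
  "FF w = (case w of (a1, a2, a3, b1, b2, b3) \<Rightarrow>
      (b1, b2, b3, force a1 a2 a3, force a2 a1 a3, force a3 a1 a2))"

lemma FF_simp[simp]: "FF (a1, a2, a3, b1, b2, b3) = (b1, b2, b3, force a1 a2 a3, force a2 a1 a3, force a3 a1 a2)"
  by (simp add: FF_def)

lemma comp_le:
  fixes x1 x2 x3 x4 x5 x6 :: complex
  shows "norm x1 \<le> norm (x1,x2,x3,x4,x5,x6) \<and> norm x2 \<le> norm (x1,x2,x3,x4,x5,x6) \<and>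
    norm x3 \<le> norm (x1,x2,x3,x4,x5,x6) \<and> norm x4 \<le> norm (x1,x2,x3,x4,x5,x6) \<and>
    norm x5 \<le> norm (x1,x2,x3,x4,x5,x6) \<and> norm x6 \<le> norm (x1,x2,x3,x4,x5,x6)"
  by (meson norm_fst_le norm_snd_le order_trans)

lemma sum_le:
  fixes x1 x2 x3 x4 x5 x6 :: complex
  shows "norm (x1,x2,x3,x4,x5,x6) \<le> norm x1 + norm x2 + norm x3 + norm x4 + norm x5 + norm x6"
proof -
  have "norm (x1,x2,x3,x4,x5,x6) \<le> norm x1 + norm (x2,x3,x4,x5,x6)" by (rule norm_Pair_le)
  also have "norm (x2,x3,x4,x5,x6) \<le> norm x2 + norm (x3,x4,x5,x6)" by (rule norm_Pair_le)
  also have "norm (x3,x4,x5,x6) \<le> norm x3 + norm (x4,x5,x6)" by (rule norm_Pair_le)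
  also have "norm (x4,x5,x6) \<le> norm x4 + norm (x5,x6)" by (rule norm_Pair_le)
  also have "norm (x5,x6) \<le> norm x5 + norm x6" by (rule norm_Pair_le)
  finally show ?thesis by simp
qed

lemma FF_lip:
  assumes "p1 \<noteq> p2" "p1 \<noteq> p3" "p2 \<noteq> p3"
  shows "\<exists>e>0. \<exists>L. \<forall>a b. dist a (p1,p2,p3,u1,u2,u3) < e \<longrightarrow> dist b (p1,p2,p3,u1,u2,u3) < e \<longrightarrow>
            norm (FF a - FF b) \<le> L * norm (a - b)"
proof -
  note fl = force_lip[unfolded atomize_imp, rule_format]
  obtain e1 L1 where e1: "e1 > 0" "L1 \<ge> 0" and l1: "\<And>x y z x' y' z'. cmod (x - p1) < e1 \<Longrightarrow> cmod (y - p2) < e1 \<Longrightarrow> cmod (z - p3) < e1 \<Longrightarrow>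
     cmod (x' - p1) < e1 \<Longrightarrow> cmod (y' - p2) < e1 \<Longrightarrow> cmod (z' - p3) < e1 \<Longrightarrow>
     cmod (force x y z - force x' y' z') \<le> L1 * (cmod (x - x') + cmod (y - y') + cmod (z - z'))"
    using force_lip[of p2 p1 p3] assms by (metis (no_types, lifting))
  obtain e2 L2 where e2: "e2 > 0" "L2 \<ge> 0" and l2: "\<And>x y z x' y' z'. cmod (x - p2) < e2 \<Longrightarrow> cmod (y - p1) < e2 \<Longrightarrow> cmod (z - p3) < e2 \<Longrightarrow>
     cmod (x' - p2) < e2 \<Longrightarrow> cmod (y' - p1) < e2 \<Longrightarrow> cmod (z' - p3) < e2 \<Longrightarrow>
     cmod (force x y z - force x' y' z') \<le> L2 * (cmod (x - x') + cmod (y - y') + cmod (z - z'))"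
    using force_lip[of p1 p2 p3] assms by (metis (no_types, lifting))
  obtain e3 L3 where e3: "e3 > 0" "L3 \<ge> 0" and l3: "\<And>x y z x' y' z'. cmod (x - p3) < e3 \<Longrightarrow> cmod (y - p1) < e3 \<Longrightarrow> cmod (z - p2) < e3 \<Longrightarrow>
     cmod (x' - p3) < e3 \<Longrightarrow> cmod (y' - p1) < e3 \<Longrightarrow> cmod (z' - p2) < e3 \<Longrightarrow>
     cmod (force x y z - force x' y' z') \<le> L3 * (cmod (x - x') + cmod (y - y') + cmod (z - z'))"
    using force_lip[of p1 p3 p2] assms by (metis (no_types, lifting))
  define e where "e = min e1 (min e2 e3)"
  define L where "L = 3 + 3 * (L1 + L2 + L3)"
  show ?thesis
  proof (intro exI conjI allI impI)
    show "e > 0" unfolding e_def using e1 e2 e3 by simp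
    fix a b :: st
    assume ha: "dist a (p1,p2,p3,u1,u2,u3) < e" and hb: "dist b (p1,p2,p3,u1,u2,u3) < e"
    obtain a1 a2 a3 a4 a5 a6 where a: "a = (a1,a2,a3,a4,a5,a6)" by (cases a) auto
    obtain b1 b2 b3 b4 b5 b6 where b: "b = (b1,b2,b3,b4,b5,b6)" by (cases b) auto
    define d where "d = norm (a - b)"
    have da: "cmod (a1 - p1) < e" "cmod (a2 - p2) < e" "cmod (a3 - p3) < e"
      using ha comp_le[of "a1 - p1" "a2 - p2" "a3 - p3" "a4 - u1" "a5 - u2" "a6 - u3"]
      unfolding a dist_norm by auto
    have db: "cmod (b1 - p1) < e" "cmod (b2 - p2) < e" "cmod (b3 - p3) < e"
      using hb comp_le[of "b1 - p1" "b2 - p2" "b3 - p3" "b4 - u1" "b5 - u2" "b6 - u3"]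
      unfolding b dist_norm by auto
    have dd: "cmod (a1 - b1) \<le> d" "cmod (a2 - b2) \<le> d" "cmod (a3 - b3) \<le> d"
       "cmod (a4 - b4) \<le> d" "cmod (a5 - b5) \<le> d" "cmod (a6 - b6) \<le> d"
      using comp_le[of "a1 - b1" "a2 - b2" "a3 - b3" "a4 - b4" "a5 - b5" "a6 - b6"]
      unfolding d_def a b by auto
    have f1: "cmod (force a1 a2 a3 - force b1 b2 b3) \<le> L1 * (3 * d)"
    proof -
      have "cmod (force a1 a2 a3 - force b1 b2 b3) \<le> L1 * (cmod (a1 - b1) + cmod (a2 - b2) + cmod (a3 - b3))"
        using l1 da db unfolding e_def by auto
      also have "\<dots> \<le> L1 * (3 * d)" using dd e1 by (intro mult_left_mono) auto
      finally show ?thesis .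
    qed
    have f2: "cmod (force a2 a1 a3 - force b2 b1 b3) \<le> L2 * (3 * d)"
    proof -
      have "cmod (force a2 a1 a3 - force b2 b1 b3) \<le> L2 * (cmod (a2 - b2) + cmod (a1 - b1) + cmod (a3 - b3))"
        using l2 da db unfolding e_def by auto
      also have "\<dots> \<le> L2 * (3 * d)" using dd e2 by (intro mult_left_mono) auto
      finally show ?thesis .
    qed
    have f3: "cmod (force a3 a1 a2 - force b3 b1 b2) \<le> L3 * (3 * d)"
    proof -
      have "cmod (force a3 a1 a2 - force b3 b1 b2) \<le> L3 * (cmod (a3 - b3) + cmod (a1 - b1) + cmod (a2 - b2))"
        using l3 da db unfolding e_def by auto
      also have "\<dots> \<le> L3 * (3 * d)" using dd e3 by (intro mult_left_mono) auto
      finally show ?thesis .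
    qed
    have "norm (FF a - FF b) \<le> cmod (a4 - b4) + cmod (a5 - b5) + cmod (a6 - b6) +
        cmod (force a1 a2 a3 - force b1 b2 b3) + cmod (force a2 a1 a3 - force b2 b1 b3) + cmod (force a3 a1 a2 - force b3 b1 b2)"
      unfolding a b using sum_le by simp
    also have "\<dots> \<le> L * d" unfolding L_def using f1 f2 f3 dd by (simp add: algebra_simps)
    finally show "norm (FF a - FF b) \<le> L * norm (a - b)" unfolding d_def .
  qed
qed

lemma ode_unique:
  fixes y z :: "real \<Rightarrow> 'a::real_normed_vector"
  assumes dy: "\<And>t. t \<in> I \<Longrightarrow> (y has_vector_derivative F (y t)) (at t within I)"
    and dz: "\<And>t. t \<in> I \<Longrightarrow> (z has_vector_derivative F (z t)) (at t within I)"
    and lip: "\<And>t. t \<in> I \<Longrightarrow> \<exists>e>0. \<exists>L. \<forall>a b. dist a (y t) < e \<longrightarrow> dist b (y t) < e \<longrightarrow>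
                 norm (F a - F b) \<le> L * norm (a - b)"
    and iv: "is_interval I"
    and t0: "t0 \<in> I" "y t0 = z t0"
    and t: "t \<in> I"
  shows "y t = z t"
proof -
  define D where "D u = y u - z u" for u
  have cy: "continuous_on I y"
    using dy by (auto simp: continuous_on_eq_continuous_within intro!: has_vector_derivative_continuous)
  have cz: "continuous_on I z"
    using dz by (auto simp: continuous_on_eq_continuous_within intro!: has_vector_derivative_continuous)
  have cD: "continuous_on I D" unfolding D_def using cy cz by (intro continuous_intros)
  have sub: "{min a b..max a b} \<subseteq> I" if "a \<in> I" "b \<in> I" for a b
  proof
    fix x assume "x \<in> {min a b..max a b}"
    then have "min a b \<le> x" "x \<le> max a b" by auto
    moreover have "min a b \<in> I" "max a b \<in> I" using that by (auto simp: min_def max_def)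
    ultimately show "x \<in> I" using iv unfolding is_interval_1 by blast
  qed
  have loc: "\<exists>h>0. \<forall>t\<in>I. dist t s < h \<longrightarrow> y t = z t" if s: "s \<in> I" "y s = z s" for s
  proof -
    obtain e L where e: "e > 0" and L: "\<forall>a b. dist a (y s) < e \<longrightarrow> dist b (y s) < e \<longrightarrow>
                 norm (F a - F b) \<le> L * norm (a - b)"
      using lip[OF s(1)] by blast
    define L' where "L' = max L 1"
    have L'pos: "L' > 0" unfolding L'_def by simp
    have "continuous (at s within I) y" using cy s(1) by (simp add: continuous_on_eq_continuous_within)
    then obtain d1 where d1: "d1 > 0" "\<forall>t\<in>I. dist t s < d1 \<longrightarrow> dist (y t) (y s) < e"
      using e unfolding continuous_within_eps_delta by blast
    have "continuous (at s within I) z" using cz s(1) by (simp add: continuous_on_eq_continuous_within)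
    then obtain d2 where d2: "d2 > 0" "\<forall>t\<in>I. dist t s < d2 \<longrightarrow> dist (z t) (z s) < e"
      using e unfolding continuous_within_eps_delta by blast
    define h where "h = min (min d1 d2) (1 / (2 * L'))"
    have hpos: "h > 0" unfolding h_def using d1 d2 L'pos by simp
    have "y t = z t" if t: "t \<in> I" "dist t s < h" for t
    proof -
      define K where "K = {min s t..max s t}"
      have KI: "K \<subseteq> I" unfolding K_def using sub s(1) t(1) by blast
      have Kd: "dist u s < h" if "u \<in> K" for u
        using that t(2) unfolding K_def dist_real_def by auto
      have "compact K" "K \<noteq> {}" unfolding K_def by auto
      moreover have "continuous_on K (\<lambda>u. norm (D u))"
        using cD KI by (intro continuous_intros) (rule continuous_on_subset)
      ultimately obtain m where m: "m \<in> K" "\<forall>u\<in>K. norm (D u) \<le> norm (D m)"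
        using continuous_attains_sup by blast
      define M where "M = norm (D m)"
      have bnd: "norm (D u) \<le> h * L' * M" if u: "u \<in> K" for u
      proof -
        have "norm (D u - D s - (u - s) *\<^sub>R (F (y s) - F (z s))) \<le> norm (u - s) * (L' * M)"
        proof (rule vector_differentiable_bound_linearization[where S=K])
          show "(D has_vector_derivative F (y x) - F (z x)) (at x within K)" if "x \<in> K" for x
            unfolding D_def using dy[of x] dz[of x] that KI
            by (auto intro!: derivative_intros intro: has_vector_derivative_within_subset)
          show "closed_segment s u \<subseteq> K" using u unfolding K_def
            by (auto simp: closed_segment_eq_real_ivl)
          show "s \<in> K" unfolding K_def by auto
          show "norm (F (y x) - F (z x) - (F (y s) - F (z s))) \<le> L' * M" if x: "x \<in> K" for x
          proof -
            have "dist (y x) (y s) < e" using d1 Kd[OF x] x KI unfolding h_def by auto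
            moreover have "dist (z x) (y s) < e" using d2 Kd[OF x] x KI s(2) unfolding h_def by auto
            ultimately have "norm (F (y x) - F (z x)) \<le> L * norm (y x - z x)" using L by blast
            also have "\<dots> \<le> L' * norm (D x)" unfolding D_def L'_def
              by (intro mult_right_mono) auto
            also have "\<dots> \<le> L' * M" unfolding M_def using m x L'pos by (intro mult_left_mono) auto
            finally show ?thesis using s(2) by simp
          qed
        qed
        then have "norm (D u) \<le> norm (u - s) * (L' * M)" using s(2) unfolding D_def by simp
        also have "\<dots> \<le> h * (L' * M)"
          using Kd[OF u] L'pos unfolding dist_real_def M_def
          by (intro mult_right_mono) auto
        finally show ?thesis by simp
      qed
      have "h * L' \<le> 1/2" unfolding h_def using L'pos by (auto simp: field_simps min_def)
      then have "h * L' * M \<le> M / 2" unfolding M_def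
        by (metis mult_right_mono norm_ge_zero times_divide_eq_left mult_1)
      then have "M \<le> M / 2" using bnd[OF m(1)] unfolding M_def by linarith
      then have "M \<le> 0" by linarith
      moreover have "t \<in> K" unfolding K_def by auto
      ultimately have "norm (D t) \<le> 0" using m unfolding M_def by force
      then show ?thesis unfolding D_def by simp
    qed
    then show ?thesis using hpos by blast
  qed
  have "connected I" using iv by (simp add: is_interval_connected)
  moreover have "openin (top_of_set I) {u \<in> I. D u = 0}"
    unfolding openin_euclidean_subtopology_iff
    using loc unfolding D_def by (auto simp: dist_commute) 
  moreover have "closedin (top_of_set I) {u \<in> I. D u = 0}"
    using cD by (rule continuous_closedin_preimage_constant)
  moreover have "t0 \<in> {u \<in> I. D u = 0}" using t0 unfolding D_def by simp
  ultimately have "{u \<in> I. D u = 0} = I" unfolding connected_clopen by blast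
  then show ?thesis using t unfolding D_def by auto
qed


definition sol :: "(real \<Rightarrow> complex) \<Rightarrow> (real \<Rightarrow> complex) \<Rightarrow> (real \<Rightarrow> complex) \<Rightarrow>
   (real \<Rightarrow> complex) \<Rightarrow> (real \<Rightarrow> complex) \<Rightarrow> (real \<Rightarrow> complex) \<Rightarrow> bool" where
  "sol q1 q2 q3 v1 v2 v3 \<longleftrightarrow> (\<forall>t\<in>{0<..1}.
            (q1 has_vector_derivative v1 t) (at t within {0..1}) \<and>
            (q2 has_vector_derivative v2 t) (at t within {0..1}) \<and>
            (q3 has_vector_derivative v3 t) (at t within {0..1}) \<and>
            (v1 has_vector_derivative force (q1 t) (q2 t) (q3 t)) (at t within {0..1}) \<and>
            (v2 has_vector_derivative force (q2 t) (q1 t) (q3 t)) (at t within {0..1}) \<and>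
            (v3 has_vector_derivative force (q3 t) (q1 t) (q2 t)) (at t within {0..1}))"

lemma force_sym: "force x y z = force x z y"
  unfolding force_def by simp

lemma force_R:
  assumes c: "c = 1 \<or> c = -1"
  shows "force (c *\<^sub>R cnj x) (c *\<^sub>R cnj y) (c *\<^sub>R cnj z) = c *\<^sub>R cnj (force x y z)"
proof -
  have n: "cmod (c *\<^sub>R cnj u - c *\<^sub>R cnj v) = cmod (u - v)" for u v
  proof -
    have "c *\<^sub>R cnj u - c *\<^sub>R cnj v = c *\<^sub>R cnj (u - v)" by (simp add: algebra_simps)
    moreover have "cmod (cnj (u - v)) = cmod (u - v)" by (rule complex_mod_cnj)
    ultimately show ?thesis using c by auto
  qed
  show ?thesis unfolding force_def n using c
    by (auto simp: scaleR_conv_of_real diff_divide_distrib algebra_simps)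
qed

lemma sol_swap: assumes "sol q1 q2 q3 v1 v2 v3" shows "sol q2 q1 q3 v2 v1 v3"
proof -
  have fs: "\<And>t. force (q3 t) (q2 t) (q1 t) = force (q3 t) (q1 t) (q2 t)" by (rule force_sym)
  show ?thesis using assms unfolding sol_def fs by simp
qed

lemma sol_R:
  assumes c: "c = 1 \<or> c = -1" and s: "sol q1 q2 q3 v1 v2 v3"
  shows "sol (\<lambda>t. c *\<^sub>R cnj (q1 t)) (\<lambda>t. c *\<^sub>R cnj (q2 t)) (\<lambda>t. c *\<^sub>R cnj (q3 t))
             (\<lambda>t. c *\<^sub>R cnj (v1 t)) (\<lambda>t. c *\<^sub>R cnj (v2 t)) (\<lambda>t. c *\<^sub>R cnj (v3 t))"
  unfolding sol_def force_R[OF c]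
proof
  fix t :: real assume t: "t \<in> {0<..1}"
  have h: "(f has_vector_derivative f') (at t within {0..1}) \<Longrightarrow>
        ((\<lambda>t. c *\<^sub>R cnj (f t)) has_vector_derivative c *\<^sub>R cnj f') (at t within {0..1})" for f f'
    by (auto intro!: derivative_eq_intros)
  show "((\<lambda>t. c *\<^sub>R cnj (q1 t)) has_vector_derivative c *\<^sub>R cnj (v1 t)) (at t within {0..1}) \<and>
        ((\<lambda>t. c *\<^sub>R cnj (q2 t)) has_vector_derivative c *\<^sub>R cnj (v2 t)) (at t within {0..1}) \<and>
        ((\<lambda>t. c *\<^sub>R cnj (q3 t)) has_vector_derivative c *\<^sub>R cnj (v3 t)) (at t within {0..1}) \<and>
        ((\<lambda>t. c *\<^sub>R cnj (v1 t)) has_vector_derivative c *\<^sub>R cnj (force (q1 t) (q2 t) (q3 t))) (at t within {0..1}) \<and>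
        ((\<lambda>t. c *\<^sub>R cnj (v2 t)) has_vector_derivative c *\<^sub>R cnj (force (q2 t) (q1 t) (q3 t))) (at t within {0..1}) \<and>
        ((\<lambda>t. c *\<^sub>R cnj (v3 t)) has_vector_derivative c *\<^sub>R cnj (force (q3 t) (q1 t) (q2 t))) (at t within {0..1})"
    using s t unfolding sol_def by (auto intro!: h)
qed

lemma sol_ode:
  assumes s: "sol q1 q2 q3 v1 v2 v3" and t: "t \<in> {0<..1}"
  shows "((\<lambda>t. (q1 t, q2 t, q3 t, v1 t, v2 t, v3 t)) has_vector_derivative
            FF (q1 t, q2 t, q3 t, v1 t, v2 t, v3 t)) (at t within {0<..1})"
proof -
  have "((\<lambda>t. (q1 t, q2 t, q3 t, v1 t, v2 t, v3 t)) has_vector_derivative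
            FF (q1 t, q2 t, q3 t, v1 t, v2 t, v3 t)) (at t within {0..1})"
    using s t unfolding sol_def FF_simp by (auto intro!: has_vector_derivative_Pair)
  then show ?thesis by (rule has_vector_derivative_within_subset) auto
qed

lemma sol_unique:
  assumes s: "sol q1 q2 q3 v1 v2 v3" and s': "sol p1 p2 p3 w1 w2 w3"
    and cf: "\<And>t. t \<in> {0<..1} \<Longrightarrow> q1 t \<noteq> q2 t \<and> q1 t \<noteq> q3 t \<and> q2 t \<noteq> q3 t"
    and t0: "t0 \<in> {0<..1}" "q1 t0 = p1 t0" "q2 t0 = p2 t0" "q3 t0 = p3 t0"
       "v1 t0 = w1 t0" "v2 t0 = w2 t0" "v3 t0 = w3 t0"
    and t: "t \<in> {0<..1}"
  shows "q1 t = p1 t \<and> q2 t = p2 t \<and> q3 t = p3 t"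
proof -
  define Y where "Y = (\<lambda>t. (q1 t, q2 t, q3 t, v1 t, v2 t, v3 t))"
  define Z where "Z = (\<lambda>t. (p1 t, p2 t, p3 t, w1 t, w2 t, w3 t))"
  have "Y t = Z t"
  proof (rule ode_unique[where I="{0<..1}" and F=FF and y=Y and z=Z])
    show "(Y has_vector_derivative FF (Y t)) (at t within {0<..1})" if "t \<in> {0<..1}" for t
      using sol_ode[OF s that] by (simp only: Y_def)
    show "(Z has_vector_derivative FF (Z t)) (at t within {0<..1})" if "t \<in> {0<..1}" for t
      using sol_ode[OF s' that] by (simp only: Z_def)
    show "\<And>t. t \<in> {0<..1} \<Longrightarrow> \<exists>e>0. \<exists>L. \<forall>a b. dist a (Y t) < e \<longrightarrow>
             dist b (Y t) < e \<longrightarrow> norm (FF a - FF b) \<le> L * norm (a - b)"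
      unfolding Y_def using cf FF_lip by blast
    show "is_interval {0<..1::real}" by (simp add: is_interval_convex_1)
  qed (use t0 t in \<open>auto simp: Y_def Z_def\<close>)
  then show ?thesis unfolding Y_def Z_def by simp
qed



lemma alg_X:
  assumes cf: "q1 \<noteq> q2" and com: "q1 + q2 + q3 = 0" and im: "Im q1 = Im q2"
    and fe: "Im (force q1 q2 q3) = Im (force q2 q1 q3)"
  shows "Im (q3 - (q1 + q2) / 2) = 0 \<or> Re (q3 - (q1 + q2) / 2) = 0"
proof -
  define c where "c = Im q1"
  have I: "Im q1 + Im q2 + Im q3 = 0" using arg_cong[OF com, of Im] by simp
  have R: "Re q1 + Re q2 + Re q3 = 0" using arg_cong[OF com, of Re] by simp
  have I3: "Im q3 = -2*c" using I im unfolding c_def by linarith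
  define r13 r23 where "r13 = cmod (q3 - q1)" and "r23 = cmod (q3 - q2)"
  have f1: "Im (force q1 q2 q3) = -3*c / r13^3" unfolding force_def r13_def using I3 im
    by (simp add: c_def)
  have f2: "Im (force q2 q1 q3) = -3*c / r23^3" unfolding force_def r23_def using I3 im
    by (simp add: c_def)
  show ?thesis
  proof (cases "c = 0")
    case True
    then show ?thesis using I3 im unfolding c_def by simp
  next
    case False
    have "r13 \<ge> 0" "r23 \<ge> 0" unfolding r13_def r23_def by auto
    have "-3*c / r13^3 = -3*c / r23^3" using fe f1 f2 by simp
    then have "r13^3 = r23^3" using False
      by (metis divide_cancel_left mult_eq_0_iff neg_equal_0_iff_equal zero_neq_numeral)
    then have "r13 = r23" using \<open>r13 \<ge> 0\<close> \<open>r23 \<ge> 0\<close> by (simp add: power_eq_iff_eq_base)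
    then have "r13^2 = r23^2" by simp
    then have "(Re q3 - Re q1)^2 + (Im q3 - Im q1)^2 = (Re q3 - Re q2)^2 + (Im q3 - Im q2)^2"
      unfolding r13_def r23_def cmod_power2 by simp
    then have "(Re q3 - Re q1)^2 = (Re q3 - Re q2)^2" using im by simp
    then have "(Re q1 - Re q2) * (2 * Re q3 - Re q1 - Re q2) = 0"
      by (simp add: algebra_simps power2_eq_square)
    moreover have "Re q1 \<noteq> Re q2" using cf im by (simp add: complex_eq_iff)
    ultimately have "2 * Re q3 - Re q1 - Re q2 = 0" by simp
    then have "Re q3 = 0" "Re q1 + Re q2 = 0" using R by linarith+
    then show ?thesis by simp
  qed
qed

lemma alg_Y:
  assumes cf: "q1 \<noteq> q2" and com: "q1 + q2 + q3 = 0" and re: "Re q1 = Re q2"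
    and fe: "Re (force q1 q2 q3) = Re (force q2 q1 q3)"
  shows "Im (q3 - (q1 + q2) / 2) = 0 \<or> Re (q3 - (q1 + q2) / 2) = 0"
proof -
  define c where "c = Re q1"
  have I: "Im q1 + Im q2 + Im q3 = 0" using arg_cong[OF com, of Im] by simp
  have R: "Re q1 + Re q2 + Re q3 = 0" using arg_cong[OF com, of Re] by simp
  have R3: "Re q3 = -2*c" using R re unfolding c_def by linarith
  define r13 r23 where "r13 = cmod (q3 - q1)" and "r23 = cmod (q3 - q2)"
  have f1: "Re (force q1 q2 q3) = -3*c / r13^3" unfolding force_def r13_def using R3 re
    by (simp add: c_def)
  have f2: "Re (force q2 q1 q3) = -3*c / r23^3" unfolding force_def r23_def using R3 re
    by (simp add: c_def)
  show ?thesis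
  proof (cases "c = 0")
    case True
    then show ?thesis using R3 re unfolding c_def by simp
  next
    case False
    have "r13 \<ge> 0" "r23 \<ge> 0" unfolding r13_def r23_def by auto
    have "-3*c / r13^3 = -3*c / r23^3" using fe f1 f2 by simp
    then have "r13^3 = r23^3" using False
      by (metis divide_cancel_left mult_eq_0_iff neg_equal_0_iff_equal zero_neq_numeral)
    then have "r13 = r23" using \<open>r13 \<ge> 0\<close> \<open>r23 \<ge> 0\<close> by (simp add: power_eq_iff_eq_base)
    then have "r13^2 = r23^2" by simp
    then have "(Re q3 - Re q1)^2 + (Im q3 - Im q1)^2 = (Re q3 - Re q2)^2 + (Im q3 - Im q2)^2"
      unfolding r13_def r23_def cmod_power2 by simp
    then have "(Im q3 - Im q1)^2 = (Im q3 - Im q2)^2" using re by simp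
    then have "(Im q1 - Im q2) * (2 * Im q3 - Im q1 - Im q2) = 0"
      by (simp add: algebra_simps power2_eq_square)
    moreover have "Im q1 \<noteq> Im q2" using cf re by (simp add: complex_eq_iff)
    ultimately have "2 * Im q3 - Im q1 - Im q2 = 0" by simp
    then have "Im q3 = 0" "Im q1 + Im q2 = 0" using I by linarith+
    then show ?thesis by simp
  qed
qed



lemma deriv_eq:
  fixes f g :: "real \<Rightarrow> 'a::real_normed_vector"
  assumes ab: "0 \<le> a" "b \<le> 1" and t0: "t0 \<in> {a<..<b}" and eq: "\<And>s. s \<in> {a<..<b} \<Longrightarrow> f s = g s"
    and df: "(f has_vector_derivative f') (at t0 within {0..1})"
    and dg: "(g has_vector_derivative g') (at t0 within {0..1})"
  shows "f' = g'"
proof -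
  have "t0 \<in> interior {0..1::real}" using ab t0 by auto
  then have w: "at t0 within {0..1} = at t0" by (rule at_within_interior)
  have "(g has_vector_derivative f') (at t0)"
    using has_vector_derivative_transform_within_open[of f f' t0 "{a<..<b}" g] df eq t0 unfolding w by auto
  then show ?thesis using dg unfolding w by (rule vector_derivative_unique_at)
qed

lemma pick:
  fixes f h :: "real \<Rightarrow> real"
  assumes ab: "a < b" and cont: "\<And>t. t \<in> {a<..<b} \<Longrightarrow> isCont f t"
    and dich: "\<And>t. t \<in> {a<..<b} \<Longrightarrow> f t = 0 \<or> h t = 0"
  shows "\<exists>a' b'. a \<le> a' \<and> a' < b' \<and> b' \<le> b \<and> ((\<forall>t\<in>{a'<..<b'}. f t = 0) \<or> (\<forall>t\<in>{a'<..<b'}. h t = 0))"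
proof (cases "\<forall>t\<in>{a<..<b}. f t = 0")
  case True
  then show ?thesis using ab by blast
next
  case False
  then obtain t where t: "t \<in> {a<..<b}" "f t \<noteq> 0" by blast
  have "isCont f t" using cont t by blast
  then obtain d where d: "d > 0" "\<And>s. dist s t < d \<Longrightarrow> dist (f s) (f t) < \<bar>f t\<bar>"
    unfolding continuous_at_eps_delta using t by (metis zero_less_abs_iff)
  define a' where "a' = max a (t - d)"
  define b' where "b' = min b (t + d)"
  have "\<forall>s\<in>{a'<..<b'}. h s = 0"
  proof
    fix s assume s: "s \<in> {a'<..<b'}"
    then have "dist s t < d" unfolding a'_def b'_def dist_real_def by auto
    then have "f s \<noteq> 0" using d(2)[of s] unfolding dist_real_def by auto
    moreover have "s \<in> {a<..<b}" using s unfolding a'_def b'_def by auto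
    ultimately show "h s = 0" using dich by blast
  qed
  moreover have "a \<le> a'" "a' < b'" "b' \<le> b" unfolding a'_def b'_def using t d by auto
  ultimately show ?thesis by blast
qed

lemma sym_case:
  assumes c: "c = 1 \<or> c = -1" and s: "sol q1 q2 q3 v1 v2 v3"
    and cf0: "\<forall>t\<in>{0<..1}. q1 t \<noteq> q2 t \<and> q1 t \<noteq> q3 t \<and> q2 t \<noteq> q3 t"
    and ab: "0 \<le> a" "a < b" "b \<le> 1"
    and fx: "\<And>t. t \<in> {a<..<b} \<Longrightarrow> q1 t = c *\<^sub>R cnj (if sw then q2 t else q1 t) \<and>
               q2 t = c *\<^sub>R cnj (if sw then q1 t else q2 t) \<and> q3 t = c *\<^sub>R cnj (q3 t)"
    and t: "t \<in> {0<..1}"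
  shows "q1 t = c *\<^sub>R cnj (if sw then q2 t else q1 t) \<and>
         q2 t = c *\<^sub>R cnj (if sw then q1 t else q2 t) \<and> q3 t = c *\<^sub>R cnj (q3 t)"
proof -
  have cf: "\<And>t. t \<in> {0<..1} \<Longrightarrow> q1 t \<noteq> q2 t \<and> q1 t \<noteq> q3 t \<and> q2 t \<noteq> q3 t"
    using cf0 by blast
  define p1 where "p1 = (\<lambda>t. c *\<^sub>R cnj (if sw then q2 t else q1 t))"
  define p2 where "p2 = (\<lambda>t. c *\<^sub>R cnj (if sw then q1 t else q2 t))"
  define p3 where "p3 = (\<lambda>t. c *\<^sub>R cnj (q3 t))"
  define w1 where "w1 = (\<lambda>t. c *\<^sub>R cnj (if sw then v2 t else v1 t))"
  define w2 where "w2 = (\<lambda>t. c *\<^sub>R cnj (if sw then v1 t else v2 t))"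
  define w3 where "w3 = (\<lambda>t. c *\<^sub>R cnj (v3 t))"
  have sp: "sol p1 p2 p3 w1 w2 w3"
  proof (cases sw)
    case True
    then show ?thesis unfolding p1_def p2_def p3_def w1_def w2_def w3_def
      using sol_R[OF c sol_swap[OF s]] by simp
  next
    case False
    then show ?thesis unfolding p1_def p2_def p3_def w1_def w2_def w3_def
      using sol_R[OF c s] by simp
  qed
  define t0 where "t0 = (a + b) / 2"
  have t0: "t0 \<in> {a<..<b}" "t0 \<in> {0<..1}" unfolding t0_def using ab by auto
  have eqs: "q1 s = p1 s" "q2 s = p2 s" "q3 s = p3 s" if "s \<in> {a<..<b}" for s
    using fx[OF that] unfolding p1_def p2_def p3_def by auto
  have "v1 t0 = w1 t0"
    by (rule deriv_eq[OF ab(1,3) t0(1) eqs(1)]) (use s sp t0 in \<open>auto simp: sol_def\<close>)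
  moreover have "v2 t0 = w2 t0"
    by (rule deriv_eq[OF ab(1,3) t0(1) eqs(2)]) (use s sp t0 in \<open>auto simp: sol_def\<close>)
  moreover have "v3 t0 = w3 t0"
    by (rule deriv_eq[OF ab(1,3) t0(1) eqs(3)]) (use s sp t0 in \<open>auto simp: sol_def\<close>)
  ultimately have "q1 t = p1 t \<and> q2 t = p2 t \<and> q3 t = p3 t"
    using sol_unique[OF s sp cf t0(2) eqs[OF t0(1)]] t by blast
  then show ?thesis unfolding p1_def p2_def p3_def by simp
qed


lemma fixA: "Im q1 = Im q2 \<Longrightarrow> Im (q3 - (q1 + q2) / 2) = 0 \<Longrightarrow> q1 + q2 + q3 = 0 \<Longrightarrow>
   q1 = cnj q1 \<and> q2 = cnj q2 \<and> q3 = cnj q3"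
  using arg_cong[of "q1 + q2 + q3" 0 Im] by (simp add: complex_eq_iff)
lemma fixB: "Im q1 = Im q2 \<Longrightarrow> Re (q3 - (q1 + q2) / 2) = 0 \<Longrightarrow> q1 + q2 + q3 = 0 \<Longrightarrow>
   q1 = - cnj q2 \<and> q2 = - cnj q1 \<and> q3 = - cnj q3"
  using arg_cong[of "q1 + q2 + q3" 0 Re] by (simp add: complex_eq_iff)
lemma fixC: "Re q1 = Re q2 \<Longrightarrow> Re (q3 - (q1 + q2) / 2) = 0 \<Longrightarrow> q1 + q2 + q3 = 0 \<Longrightarrow>
   q1 = - cnj q1 \<and> q2 = - cnj q2 \<and> q3 = - cnj q3"
  using arg_cong[of "q1 + q2 + q3" 0 Re] by (simp add: complex_eq_iff)
lemma fixD: "Re q1 = Re q2 \<Longrightarrow> Im (q3 - (q1 + q2) / 2) = 0 \<Longrightarrow> q1 + q2 + q3 = 0 \<Longrightarrow>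
   q1 = cnj q2 \<and> q2 = cnj q1 \<and> q3 = cnj q3"
  using arg_cong[of "q1 + q2 + q3" 0 Im] by (simp add: complex_eq_iff)

lemma hh1: assumes "z = cnj z" shows "Im z = 0"
  using arg_cong[OF assms, of Im] by simp
lemma hh2: assumes "z = - cnj z" shows "Re z = 0"
  using arg_cong[OF assms, of Re] by simp
lemma hh3: assumes "x = - cnj y" shows "Im x = Im y \<and> Re x = - Re y"
  using arg_cong[OF assms, of Re] arg_cong[OF assms, of Im] by simp
lemma hh4: assumes "x = cnj y" shows "Re x = Re y \<and> Im x = - Im y"
  using arg_cong[OF assms, of Re] arg_cong[OF assms, of Im] by simp

theorem proposition5p6:
  fixes q1 q2 q3 v1 v2 v3 :: "real \<Rightarrow> complex"
  assumes adm: "admissible q1 q2 q3"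
    and minimizer: "\<And>p1 p2 p3. admissible p1 p2 p3 \<Longrightarrow> action q1 q2 q3 \<le> action p1 p2 p3"
    and collision_free: "\<And>t. t \<in> {0<..1} \<Longrightarrow>
            q1 t \<noteq> q2 t \<and> q1 t \<noteq> q3 t \<and> q2 t \<noteq> q3 t"
    and vel: "\<And>t. t \<in> {0<..1} \<Longrightarrow>
            (q1 has_vector_derivative v1 t) (at t within {0..1}) \<and>
            (q2 has_vector_derivative v2 t) (at t within {0..1}) \<and>
            (q3 has_vector_derivative v3 t) (at t within {0..1})"
    and newton: "\<And>t. t \<in> {0<..1} \<Longrightarrow>
            (v1 has_vector_derivative force (q1 t) (q2 t) (q3 t)) (at t within {0..1}) \<and>
            (v2 has_vector_derivative force (q2 t) (q1 t) (q3 t)) (at t within {0..1}) \<and>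
            (v3 has_vector_derivative force (q3 t) (q1 t) (q2 t)) (at t within {0..1})"
    and on_axis: "\<exists>t1 t2. 0 < t1 \<and> t1 < t2 \<and> t2 \<le> 1 \<and>
            ((\<forall>t\<in>{t1..t2}. on_x_axis (q1 t - q2 t)) \<or>
             (\<forall>t\<in>{t1..t2}. on_y_axis (q1 t - q2 t)))"
  shows "((\<forall>t\<in>{0<..1}. on_x_axis (q1 t - q2 t)) \<or>
          (\<forall>t\<in>{0<..1}. on_y_axis (q1 t - q2 t))) \<and>
         ((\<forall>t\<in>{0<..1}. on_x_axis (q3 t - (q1 t + q2 t) / 2)) \<or>
          (\<forall>t\<in>{0<..1}. on_y_axis (q3 t - (q1 t + q2 t) / 2)))"
proof -
  have s: "sol q1 q2 q3 v1 v2 v3" unfolding sol_def using vel newton by blast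
  have com: "\<And>t. t \<in> {0<..1} \<Longrightarrow> q1 t + q2 t + q3 t = 0" using adm unfolding admissible_def by auto
  obtain t1 t2 where tt: "0 < t1" "t1 < t2" "t2 \<le> 1" and
    ax: "(\<forall>t\<in>{t1..t2}. Im (q1 t - q2 t) = 0) \<or> (\<forall>t\<in>{t1..t2}. Re (q1 t - q2 t) = 0)"
    using on_axis unfolding on_x_axis_def on_y_axis_def by blast
  have inI: "t \<in> {0<..1}" if "t \<in> {t1<..<t2}" for t using that tt by auto
  have inO: "t \<in> {0<..<1}" if "t \<in> {t1<..<t2}" for t using that tt by auto
  have w: "at t within {0..1} = at t" if "t \<in> {t1<..<t2}" for t
    using inO[OF that] by (intro at_within_interior) auto
  have isc: "isCont (\<lambda>t. Im (q3 t - (q1 t + q2 t) / 2)) t" if "t \<in> {t1<..<t2}" for t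
  proof -
    have "isCont q1 t" "isCont q2 t" "isCont q3 t"
      using vel[OF inI[OF that]] has_vector_derivative_continuous unfolding w[OF that] by blast+
    then show ?thesis by (auto intro!: continuous_intros)
  qed
  have dich: "Im (q3 t - (q1 t + q2 t) / 2) = 0 \<or> Re (q3 t - (q1 t + q2 t) / 2) = 0"
    if t: "t \<in> {t1<..<t2}" for t
    using ax
  proof
    assume hX: "\<forall>t\<in>{t1..t2}. Im (q1 t - q2 t) = 0"
    have e1: "cnj (q1 s - q2 s) = q1 s - q2 s" if "s \<in> {t1<..<t2}" for s
      using hX that by (simp add: complex_eq_iff)
    have e2: "cnj (v1 s - v2 s) = v1 s - v2 s" if "s \<in> {t1<..<t2}" for s
      by (rule deriv_eq[of t1 t2 s "\<lambda>s. cnj (q1 s - q2 s)" "\<lambda>s. q1 s - q2 s"])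
        (use tt that e1 vel[OF inI[OF that]] in \<open>auto intro!: derivative_eq_intros\<close>)
    have e3: "cnj (force (q1 t) (q2 t) (q3 t) - force (q2 t) (q1 t) (q3 t)) =
              force (q1 t) (q2 t) (q3 t) - force (q2 t) (q1 t) (q3 t)"
      by (rule deriv_eq[of t1 t2 t "\<lambda>s. cnj (v1 s - v2 s)" "\<lambda>s. v1 s - v2 s"])
        (use tt t e2 newton[OF inI[OF t]] in \<open>auto intro!: derivative_eq_intros\<close>)
    have "Im (force (q1 t) (q2 t) (q3 t)) = Im (force (q2 t) (q1 t) (q3 t))"
      using e3 by (simp add: complex_eq_iff)
    moreover have "Im (q1 t) = Im (q2 t)" using hX t by auto
    ultimately show ?thesis using alg_X collision_free[OF inI[OF t]] com[OF inI[OF t]] by blast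
  next
    assume hY: "\<forall>t\<in>{t1..t2}. Re (q1 t - q2 t) = 0"
    have e1: "- cnj (q1 s - q2 s) = q1 s - q2 s" if "s \<in> {t1<..<t2}" for s
      using hY that by (simp add: complex_eq_iff)
    have e2: "- cnj (v1 s - v2 s) = v1 s - v2 s" if "s \<in> {t1<..<t2}" for s
      by (rule deriv_eq[of t1 t2 s "\<lambda>s. - cnj (q1 s - q2 s)" "\<lambda>s. q1 s - q2 s"])
        (use tt that e1 vel[OF inI[OF that]] in \<open>auto intro!: derivative_eq_intros\<close>)
    have e3: "- cnj (force (q1 t) (q2 t) (q3 t) - force (q2 t) (q1 t) (q3 t)) =
              force (q1 t) (q2 t) (q3 t) - force (q2 t) (q1 t) (q3 t)"
      by (rule deriv_eq[of t1 t2 t "\<lambda>s. - cnj (v1 s - v2 s)" "\<lambda>s. v1 s - v2 s"])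
        (use tt t e2 newton[OF inI[OF t]] in \<open>auto intro!: derivative_eq_intros\<close>)
    have "Re (force (q1 t) (q2 t) (q3 t)) = Re (force (q2 t) (q1 t) (q3 t))"
      using e3 by (simp add: complex_eq_iff)
    moreover have "Re (q1 t) = Re (q2 t)" using hY t by auto
    ultimately show ?thesis using alg_Y collision_free[OF inI[OF t]] com[OF inI[OF t]] by blast
  qed
  obtain a b where ab: "t1 \<le> a" "a < b" "b \<le> t2" and
    z2: "(\<forall>t\<in>{a<..<b}. Im (q3 t - (q1 t + q2 t) / 2) = 0) \<or> (\<forall>t\<in>{a<..<b}. Re (q3 t - (q1 t + q2 t) / 2) = 0)"
    using pick[OF tt(2) isc dich] by blast
  have ab01: "0 \<le> a" "a < b" "b \<le> 1" using ab tt by auto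
  have sub: "t \<in> {t1..t2}" "t \<in> {0<..1}" if "t \<in> {a<..<b}" for t using that ab tt by auto
  have cfb: "\<forall>t\<in>{0<..1}. q1 t \<noteq> q2 t \<and> q1 t \<noteq> q3 t \<and> q2 t \<noteq> q3 t"
    using collision_free by blast
  show ?thesis
    using ax
  proof
    assume hX: "\<forall>t\<in>{t1..t2}. Im (q1 t - q2 t) = 0"
    show ?thesis using z2
    proof
      assume h2: "\<forall>t\<in>{a<..<b}. Im (q3 t - (q1 t + q2 t) / 2) = 0"
      have r: "q1 t = cnj (q1 t) \<and> q2 t = cnj (q2 t) \<and> q3 t = cnj (q3 t)" if "t \<in> {0<..1}" for t
      proof -
        have fx: "q1 t = cnj (q1 t) \<and> q2 t = cnj (q2 t) \<and> q3 t = cnj (q3 t)" if "t \<in> {a<..<b}" for t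
          proof -
            have A: "Im (q1 t) = Im (q2 t)" using hX sub(1)[OF that] by auto
            have B: "Im (q3 t - (q1 t + q2 t) / 2) = 0" using h2 that by blast
            show ?thesis by (rule fixA[OF A B com[OF sub(2)[OF that]]])
          qed
        have "q1 t = (1) *\<^sub>R cnj (if False then q2 t else q1 t) \<and> q2 t = (1) *\<^sub>R cnj (if False then q1 t else q2 t) \<and> q3 t = (1) *\<^sub>R cnj (q3 t)"
          apply (rule sym_case[where c="1" and sw=False and t=t, OF _ s cfb ab01])
          apply simp
         apply (simp only: if_True if_False scaleR_one scaleR_minus1_left, erule fx)
         by (rule that)
        then show ?thesis unfolding if_True if_False scaleR_one scaleR_minus1_left .
      qed
      show ?thesis
      proof -
        have "Im (q1 t) = 0 \<and> Im (q2 t) = 0 \<and> Im (q3 t) = 0" if "t \<in> {0<..1}" for t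
          using r[OF that] hh1 by blast
        then show ?thesis unfolding on_x_axis_def on_y_axis_def by simp
      qed
    next
      assume h2: "\<forall>t\<in>{a<..<b}. Re (q3 t - (q1 t + q2 t) / 2) = 0"
      have r: "q1 t = - cnj (q2 t) \<and> q2 t = - cnj (q1 t) \<and> q3 t = - cnj (q3 t)" if "t \<in> {0<..1}" for t
      proof -
        have fx: "q1 t = - cnj (q2 t) \<and> q2 t = - cnj (q1 t) \<and> q3 t = - cnj (q3 t)" if "t \<in> {a<..<b}" for t
          proof -
            have A: "Im (q1 t) = Im (q2 t)" using hX sub(1)[OF that] by auto
            have B: "Re (q3 t - (q1 t + q2 t) / 2) = 0" using h2 that by blast
            show ?thesis by (rule fixB[OF A B com[OF sub(2)[OF that]]])
          qed
        have "q1 t = (-1) *\<^sub>R cnj (if True then q2 t else q1 t) \<and> q2 t = (-1) *\<^sub>R cnj (if True then q1 t else q2 t) \<and> q3 t = (-1) *\<^sub>R cnj (q3 t)"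
          apply (rule sym_case[where c="-1" and sw=True and t=t, OF _ s cfb ab01])
          apply simp
         apply (simp only: if_True if_False scaleR_one scaleR_minus1_left, erule fx)
         by (rule that)
        then show ?thesis unfolding if_True if_False scaleR_one scaleR_minus1_left .
      qed
      show ?thesis 
      proof -
        have "Im (q1 t) = Im (q2 t) \<and> Re (q1 t) = - Re (q2 t) \<and> Re (q3 t) = 0" if "t \<in> {0<..1}" for t
          using r[OF that] hh2 hh3 by blast
        then show ?thesis unfolding on_x_axis_def on_y_axis_def by simp
      qed
    qed
  next
    assume hY: "\<forall>t\<in>{t1..t2}. Re (q1 t - q2 t) = 0"
    show ?thesis using z2
    proof
      assume h2: "\<forall>t\<in>{a<..<b}. Im (q3 t - (q1 t + q2 t) / 2) = 0"
      have r: "q1 t = cnj (q2 t) \<and> q2 t = cnj (q1 t) \<and> q3 t = cnj (q3 t)" if "t \<in> {0<..1}" for t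
      proof -
        have fx: "q1 t = cnj (q2 t) \<and> q2 t = cnj (q1 t) \<and> q3 t = cnj (q3 t)" if "t \<in> {a<..<b}" for t
          proof -
            have A: "Re (q1 t) = Re (q2 t)" using hY sub(1)[OF that] by auto
            have B: "Im (q3 t - (q1 t + q2 t) / 2) = 0" using h2 that by blast
            show ?thesis by (rule fixD[OF A B com[OF sub(2)[OF that]]])
          qed
        have "q1 t = (1) *\<^sub>R cnj (if True then q2 t else q1 t) \<and> q2 t = (1) *\<^sub>R cnj (if True then q1 t else q2 t) \<and> q3 t = (1) *\<^sub>R cnj (q3 t)"
          apply (rule sym_case[where c="1" and sw=True and t=t, OF _ s cfb ab01])
          apply simp
         apply (simp only: if_True if_False scaleR_one scaleR_minus1_left, erule fx)
         by (rule that)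
        then show ?thesis unfolding if_True if_False scaleR_one scaleR_minus1_left .
      qed
      show ?thesis 
      proof -
        have "Re (q1 t) = Re (q2 t) \<and> Im (q1 t) = - Im (q2 t) \<and> Im (q3 t) = 0" if "t \<in> {0<..1}" for t
          using r[OF that] hh1 hh4 by blast
        then show ?thesis unfolding on_x_axis_def on_y_axis_def by simp
      qed
    next
      assume h2: "\<forall>t\<in>{a<..<b}. Re (q3 t - (q1 t + q2 t) / 2) = 0"
      have r: "q1 t = - cnj (q1 t) \<and> q2 t = - cnj (q2 t) \<and> q3 t = - cnj (q3 t)" if "t \<in> {0<..1}" for t
      proof -
        have fx: "q1 t = - cnj (q1 t) \<and> q2 t = - cnj (q2 t) \<and> q3 t = - cnj (q3 t)" if "t \<in> {a<..<b}" for t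
          proof -
            have A: "Re (q1 t) = Re (q2 t)" using hY sub(1)[OF that] by auto
            have B: "Re (q3 t - (q1 t + q2 t) / 2) = 0" using h2 that by blast
            show ?thesis by (rule fixC[OF A B com[OF sub(2)[OF that]]])
          qed
        have "q1 t = (-1) *\<^sub>R cnj (if False then q2 t else q1 t) \<and> q2 t = (-1) *\<^sub>R cnj (if False then q1 t else q2 t) \<and> q3 t = (-1) *\<^sub>R cnj (q3 t)"
          apply (rule sym_case[where c="-1" and sw=False and t=t, OF _ s cfb ab01])
          apply simp
         apply (simp only: if_True if_False scaleR_one scaleR_minus1_left, erule fx)
         by (rule that)
        then show ?thesis unfolding if_True if_False scaleR_one scaleR_minus1_left .
      qed
      show ?thesis 
      proof -
        have "Re (q1 t) = 0 \<and> Re (q2 t) = 0 \<and> Re (q3 t) = 0" if "t \<in> {0<..1}" for t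
          using r[OF that] hh2 by blast
        then show ?thesis unfolding on_x_axis_def on_y_axis_def by simp
      qed
    qed
  qed
qed


end
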